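(* Let $A=(A^m(x_1,\dots,x_m))_{m\ge0}$ be a mould with $A^0=0$ such that $A^m(x_1,\dots,x_m)=A^{m-1}(x_1,\dots,x_{m-1})-A^{m-1}(x_2,\dots,x_m)$ for all $m\ge2$. Then $A$ is alternal.
   Context: A mould is a family $A=(A^m(x_1,\dots,x_m))_{m\ge0}$ with $A^m\in\mathbb{Q}((x_1,\dots,x_m))$ (fraction field of $\mathbb{Q}[[x_1,\dots,x_m]]$), extended linearly to formal linear combinations of words. The shuffle product of words is defined by $\emptyset\,\text{ш}\,\omega=\omega\,\text{ш}\,\emptyset=\omega$ and $a\omega\,\text{ш}\,b\eta=a(\omega\,\text{ш}\,b\eta)+b(a\omega\,\text{ш}\,\eta)$. A mould $A$ with $A^0=0$ is alternal if $A^{p+q}\bigl((x_1,\dots,x_p)\,\text{ш}\,(x_{p+1},\dots,x_{p+q})\bigr)=0$ for all $p,q\ge1$. *)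

theory Defs
  imports Main
begin

(* Shuffle product of two words, as a formal sum of words (a list = multiset of words,
   with multiplicities), following the recursion of the paper:
   [] sh w = w sh [] = w,  a w sh b v = a (w sh b v) + b (a w sh v). *)
fun shuffle :: "'a list \<Rightarrow> 'a list \<Rightarrow> 'a list list" where
  "shuffle [] ys = [ys]"
| "shuffle (x # xs) [] = [x # xs]"
| "shuffle (x # xs) (y # ys) =
     map ((#) x) (shuffle xs (y # ys)) @ map ((#) y) (shuffle (x # xs) ys)"

(* A mould is modelled by its values on words of (distinct) variables:
   A w stands for A^m(w_1,...,w_m), m = length w, i.e. A^m with the variables
   x_1..x_m substituted by w_1..w_m. *)
definition mould_lin :: "('v list \<Rightarrow> 'r::ab_group_add) \<Rightarrow> 'v list list \<Rightarrow> 'r" where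
  "mould_lin A ws = sum_list (map A ws)"

definition alternal :: "('v list \<Rightarrow> 'r::ab_group_add) \<Rightarrow> bool" where
  "alternal A \<longleftrightarrow> A [] = 0 \<and>
     (\<forall>u v. distinct (u @ v) \<and> u \<noteq> [] \<and> v \<noteq> [] \<longrightarrow> mould_lin A (shuffle u v) = 0)"

end

theory Submission
  imports Defs
begin

definition S :: "('v list \<Rightarrow> 'r::ab_group_add) \<Rightarrow> 'v list \<Rightarrow> 'v list \<Rightarrow> 'r" where
  "S g u v = sum_list (map g (shuffle u v))"

lemma shuffle_Nil2[simp]: "shuffle u [] = [u]"
  by (cases u) auto

lemma S_Nil1[simp]: "S g [] v = g v" and S_Nil2[simp]: "S g u [] = g u"
  by (auto simp: S_def)

lemma S_Cons: "S g (x#xs) (y#ys) = S (g \<circ> (#) x) xs (y#ys) + S (g \<circ> (#) y) (x#xs) ys"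
  by (simp add: S_def comp_def)

lemma shuffle_mset: "s \<in> set (shuffle u v) \<Longrightarrow> length s = length u + length v \<and> set s = set u \<union> set v"
  by (induction u v arbitrary: s rule: shuffle.induct) auto

lemma S_cong: "(\<And>s. s \<in> set (shuffle u v) \<Longrightarrow> f s = g s) \<Longrightarrow> S f u v = S g u v"
  unfolding S_def by (metis map_cong)

lemma S_diff: "S (\<lambda>s. f s - g s) u v = S f u v - S g u v"
  unfolding S_def by (induction "shuffle u v") (auto simp: sum_list_subtractf)

lemma S_tl: "u \<noteq> [] \<Longrightarrow> v \<noteq> [] \<Longrightarrow> S (g \<circ> tl) u v = S g (tl u) v + S g u (tl v)"
  by (cases u; cases v) (auto simp: S_Cons comp_def)

lemma S_butlast: "u \<noteq> [] \<Longrightarrow> v \<noteq> [] \<Longrightarrow>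
   S (g \<circ> butlast) u v = S g (butlast u) v + S g u (butlast v)"
proof (induction u v arbitrary: g rule: shuffle.induct)
  case (3 x xs y ys)
  have e1: "S (g \<circ> butlast \<circ> (#) x) xs (y#ys) = S ((g \<circ> (#) x) \<circ> butlast) xs (y#ys)"
    apply (rule S_cong)
    subgoal for s using shuffle_mset[of s] by (cases s) (auto simp: comp_def)
    done
  have e2: "S (g \<circ> butlast \<circ> (#) y) (x#xs) ys = S ((g \<circ> (#) y) \<circ> butlast) (x#xs) ys"
    apply (rule S_cong)
    subgoal for s using shuffle_mset[of s] by (cases s) (auto simp: comp_def)
    done
  show ?case
    using 3(1)[of "g \<circ> (#) x"] 3(2)[of "g \<circ> (#) y"]
    by (cases xs; cases ys) (auto simp: S_Cons e1 e2 algebra_simps comp_def)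
qed auto

lemma main:
  fixes A :: "'v list \<Rightarrow> 'r::ab_group_add"
  assumes rec: "\<And>w. distinct w \<Longrightarrow> length w \<ge> 2 \<Longrightarrow> A w = A (butlast w) - A (tl w)"
  shows "distinct (u @ v) \<Longrightarrow> u \<noteq> [] \<Longrightarrow> v \<noteq> [] \<Longrightarrow> S A u v = 0"
proof (induction "length u + length v" arbitrary: u v rule: less_induct)
  case less
  have d: "distinct u" "distinct v" "set u \<inter> set v = {}" using less.prems(1) by auto
  have "S A u v = S (\<lambda>s. A (butlast s) - A (tl s)) u v"
  proof (rule S_cong)
    fix s assume "s \<in> set (shuffle u v)"
    hence m: "length s = length u + length v" "set s = set u \<union> set v" using shuffle_mset by blast+
    have "card (set s) = length s" using m d
      by (simp add: card_Un_disjoint distinct_card)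
    hence "distinct s" by (rule card_distinct)
    moreover have "length s \<ge> 2" using m less.prems(2,3)
      by (cases u; cases v) auto
    ultimately show "A s = A (butlast s) - A (tl s)" by (rule rec)
  qed
  also have "\<dots> = S A (butlast u) v + S A u (butlast v) - (S A (tl u) v + S A u (tl v))"
    using S_diff[of "\<lambda>s. A (butlast s)" "\<lambda>s. A (tl s)" u v]
      S_butlast[OF less.prems(2,3), of A] S_tl[OF less.prems(2,3), of A]
    by (simp add: comp_def)
  also have "S A (butlast u) v = S A (tl u) v"
  proof (cases "length u = 1")
    case True then show ?thesis by (cases u) auto
  next
    case False
    hence ne: "butlast u \<noteq> []" "tl u \<noteq> []" using less.prems(2)
      by (cases u; auto)+
    have "S A (butlast u) v = 0"
      apply (rule less.hyps[OF _ _ ne(1) less.prems(3)])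
      using less.prems(2) apply (cases u) apply auto[2]
      using d by (auto dest: in_set_butlastD simp: distinct_butlast)
    moreover have "S A (tl u) v = 0"
      apply (rule less.hyps[OF _ _ ne(2) less.prems(3)])
      using less.prems(2) apply (cases u) apply auto[2]
      using d less.prems(2,3) by (cases u; cases v; auto simp: distinct_tl)
    ultimately show ?thesis by simp
  qed
  also have "S A u (butlast v) = S A u (tl v)"
  proof (cases "length v = 1")
    case True then show ?thesis by (cases v) auto
  next
    case False
    hence ne: "butlast v \<noteq> []" "tl v \<noteq> []" using less.prems(3)
      by (cases v; auto)+
    have "S A u (butlast v) = 0"
      apply (rule less.hyps[OF _ _ less.prems(2) ne(1)])
      using less.prems(3) apply (cases v) apply auto[2]
      using d by (auto dest: in_set_butlastD simp: distinct_butlast)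
    moreover have "S A u (tl v) = 0"
      apply (rule less.hyps[OF _ _ less.prems(2) ne(2)])
      using less.prems(3) apply (cases v) apply auto[2]
      using d less.prems(2,3) by (cases u; cases v; auto simp: distinct_tl)
    ultimately show ?thesis by simp
  qed
  finally show ?case by simp
qed

theorem lemma1p29:
  fixes A :: "'v list \<Rightarrow> 'r::ab_group_add"
  assumes "A [] = 0"
    and "\<And>w. distinct w \<Longrightarrow> length w \<ge> 2 \<Longrightarrow> A w = A (butlast w) - A (tl w)"
  shows "alternal A"
  unfolding alternal_def mould_lin_def
  using assms(1) main[OF assms(2)] by (auto simp: S_def)

end
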